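(* Let $(\vec s_i)_{i\in\mathbb N}$ be a strictly increasing sequence of oriented separations of a graph $G$ and $(P_i)_{i\in\mathbb N}$ a sequence of pre-tangles in $G$. Suppose that (IM1) $\overleftarrow{s}_i\in P_i$ and $\vec s_i\in P_{i+1}$ for all $i$, and (IM2') the separation $s_i$ efficiently distinguishes $P_i$ and $P_{i+1}$ for all $i$. Then (IM2) holds: for all $i<j$, every separation of minimal order among $s_i,\dots,s_{j-1}$ efficiently distinguishes $P_i$ and $P_j$.
   Context: Notation: $s$ denotes a separation (an unordered pair $\{A,B\}$ of subsets of $V(G)$ with $A\cup B=V(G)$ and no edge between $A\setminus B$ and $B\setminus A$; order $|s|=|A\cap B|$), $\vec s$ and $\overleftarrow{s}$ its two orientations $(A,B)$, $(B,A)$; oriented separations are ordered by $(A,B)\le(C,D)$ iff $A\subseteq C$ and $B\supseteq D$. A set $O$ of oriented separations is consistent if there are no $(A,B),(C,D)\in O$ with $\{A,B\}\ne\{C,D\}$ and $(B,A)\le(C,D)$. A pre-tangle is a consistent set $P$ which, for some $k\in\mathbb N\cup\{\aleph_0\}$, contains exactly one orientation of every separation of order $<k$ and nothing else. A separation distinguishes two pre-tangles if both contain an orientation of it but different ones; efficiently if it has minimum order among all separations distinguishing them. *)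

theory Defs
  imports Main "HOL-Library.Extended_Nat"
begin

text \<open>A graph is given by a vertex set V and an edge set E of (ordered) pairs;
  an edge (x,y) joins x and y. An oriented separation is the pair (A,B);
  the underlying unordered separation is {A,B}.\<close>

definition is_graph :: "'v set \<Rightarrow> ('v \<times> 'v) set \<Rightarrow> bool" where
  "is_graph V E \<longleftrightarrow> E \<subseteq> V \<times> V"

definition is_sep :: "'v set \<Rightarrow> ('v \<times> 'v) set \<Rightarrow> 'v set \<times> 'v set \<Rightarrow> bool" where
  "is_sep V E s \<longleftrightarrow> (case s of (A, B) \<Rightarrow>
     A \<union> B = V \<and> (\<forall>x\<in>A - B. \<forall>y\<in>B - A. (x, y) \<notin> E \<and> (y, x) \<notin> E))"

definition flip :: "'v set \<times> 'v set \<Rightarrow> 'v set \<times> 'v set" where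
  "flip s = (snd s, fst s)"

definition unor :: "'v set \<times> 'v set \<Rightarrow> 'v set set" where
  "unor s = {fst s, snd s}"

definition sep_order :: "'v set \<times> 'v set \<Rightarrow> enat" where
  "sep_order s = (if finite (fst s \<inter> snd s) then enat (card (fst s \<inter> snd s)) else \<infinity>)"

definition sep_le :: "'v set \<times> 'v set \<Rightarrow> 'v set \<times> 'v set \<Rightarrow> bool" where
  "sep_le s t \<longleftrightarrow> fst s \<subseteq> fst t \<and> snd t \<subseteq> snd s"

definition sep_less :: "'v set \<times> 'v set \<Rightarrow> 'v set \<times> 'v set \<Rightarrow> bool" where
  "sep_less s t \<longleftrightarrow> sep_le s t \<and> s \<noteq> t"

definition consistent :: "('v set \<times> 'v set) set \<Rightarrow> bool" where
  "consistent O' \<longleftrightarrow>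
     \<not> (\<exists>s\<in>O'. \<exists>t\<in>O'. unor s \<noteq> unor t \<and> sep_le (flip s) t)"

text \<open>Pre-tangle: for some k \<in> \<nat> \<union> {aleph_0} (modelled as enat, \<infinity> = aleph_0),
  exactly one orientation of every separation of order < k and nothing else.\<close>
definition pre_tangle :: "'v set \<Rightarrow> ('v \<times> 'v) set \<Rightarrow> ('v set \<times> 'v set) set \<Rightarrow> bool" where
  "pre_tangle V E P \<longleftrightarrow> consistent P \<and>
     (\<exists>k::enat.
        (\<forall>s\<in>P. is_sep V E s \<and> sep_order s < k) \<and>
        (\<forall>s. is_sep V E s \<and> sep_order s < k \<longrightarrow>
             (s \<in> P \<or> flip s \<in> P) \<and> (s \<in> P \<and> flip s \<in> P \<longrightarrow> s = flip s)))"

definition distinguishes ::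
  "'v set \<Rightarrow> ('v \<times> 'v) set \<Rightarrow> ('v set \<times> 'v set) set \<Rightarrow> ('v set \<times> 'v set) set
   \<Rightarrow> 'v set \<times> 'v set \<Rightarrow> bool" where
  "distinguishes V E P Q s \<longleftrightarrow> is_sep V E s \<and>
     (\<exists>x y. x \<in> P \<and> y \<in> Q \<and> x \<in> {s, flip s} \<and> y \<in> {s, flip s} \<and> x \<noteq> y)"

definition eff_distinguishes ::
  "'v set \<Rightarrow> ('v \<times> 'v) set \<Rightarrow> ('v set \<times> 'v set) set \<Rightarrow> ('v set \<times> 'v set) set
   \<Rightarrow> 'v set \<times> 'v set \<Rightarrow> bool" where
  "eff_distinguishes V E P Q s \<longleftrightarrow> distinguishes V E P Q s \<and>
     (\<forall>t. distinguishes V E P Q t \<longrightarrow> sep_order s \<le> sep_order t)"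

end

theory Submission
  imports Defs
begin

lemma pt_orient:
  assumes "pre_tangle V E P" "x \<in> P" "is_sep V E t" "sep_order t \<le> sep_order x"
  shows "t \<in> P \<or> flip t \<in> P"
proof -
  obtain k where k: "\<forall>s\<in>P. is_sep V E s \<and> sep_order s < k"
    "\<forall>s. is_sep V E s \<and> sep_order s < k \<longrightarrow> (s \<in> P \<or> flip s \<in> P)"
    using assms(1) unfolding pre_tangle_def by blast
  have "sep_order x < k" using k(1) assms(2) by blast
  hence "sep_order t < k" using assms(4) by (rule le_less_trans[rotated])
  thus ?thesis using k(2)[rule_format, of t] assms(3) by simp
qed

lemma pt_mem:
  assumes "pre_tangle V E P" "x \<in> P"
  shows "is_sep V E x \<and> sep_order x \<noteq> \<infinity>"
proof -
  obtain k where k: "\<forall>s\<in>P. is_sep V E s \<and> sep_order s < k"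
    using assms(1) unfolding pre_tangle_def by blast
  hence "is_sep V E x" "sep_order x < k" using assms(2) by auto
  thus ?thesis using enat_ord_simps(6) by metis
qed

lemma order_flip: "sep_order (flip t) = sep_order t"
  by (simp add: sep_order_def flip_def Int_commute)

lemma is_sep_flip: "is_sep V E t \<Longrightarrow> is_sep V E (flip t)"
  by (auto simp: is_sep_def flip_def split: prod.splits)

lemma pt_both:
  assumes "pre_tangle V E P" "t \<in> P" "flip t \<in> P"
  shows "t = flip t"
  using assms unfolding pre_tangle_def by blast

lemma pt_cons:
  assumes "pre_tangle V E P" "a \<in> P" "b \<in> P" "sep_le (flip a) b"
  shows "b = a \<or> b = flip a"
proof -
  have "unor a = unor b" using assms unfolding pre_tangle_def consistent_def by blast
  thus ?thesis unfolding unor_def flip_def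
    by (metis doubleton_eq_iff prod.collapse)
qed

lemma sep_le_trans: "sep_le a b \<Longrightarrow> sep_le b c \<Longrightarrow> sep_le a c"
  unfolding sep_le_def by blast

lemma sep_le_antisym: "sep_le a b \<Longrightarrow> sep_le b a \<Longrightarrow> a = b"
  unfolding sep_le_def by (metis prod_eq_iff subset_antisym)

lemma chain_le:
  assumes incr: "\<forall>i. sep_less (s i) (s (Suc i))"
  shows "a \<le> b \<Longrightarrow> sep_le (s a) (s b)"
proof (induction b)
  case 0 thus ?case by (simp add: sep_le_def)
next
  case (Suc b)
  show ?case
  proof (cases "a = Suc b")
    case True thus ?thesis by (simp add: sep_le_def)
  next
    case False
    hence "sep_le (s a) (s b)" using Suc by simp
    thus ?thesis using incr sep_le_trans unfolding sep_less_def by blast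
  qed
qed

lemma chain_less:
  assumes incr: "\<forall>i. sep_less (s i) (s (Suc i))"
  shows "a < b \<Longrightarrow> sep_le (s a) (s b) \<and> s a \<noteq> s b"
proof -
  assume "a < b"
  have 1: "sep_le (s a) (s b)" using chain_le[OF incr] \<open>a < b\<close> by simp
  have 2: "sep_le (s (Suc a)) (s b)" using chain_le[OF incr] \<open>a < b\<close> by simp
  have 3: "sep_le (s a) (s (Suc a))" "s a \<noteq> s (Suc a)" using incr unfolding sep_less_def by auto
  show ?thesis using 1 2 3 sep_le_antisym sep_le_trans by metis
qed

lemma fst_not_V:
  assumes seps: "\<forall>i. is_sep V E (s i)"
    and incr: "\<forall>i. sep_less (s i) (s (Suc i))"
    and fin: "\<forall>i. finite (fst (s i) \<inter> snd (s i))"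
  shows "fst (s n) \<noteq> V"
proof
  assume h: "fst (s n) = V"
  have sub: "fst (s i) \<subseteq> V \<and> snd (s i) \<subseteq> V" for i
    using seps[rule_format, of i] unfolding is_sep_def by (cases "s i") auto
  have key: "fst (s (n + k)) = V \<and> finite (snd (s (n+k))) \<and> card (snd (s (n + k))) + k \<le> card (snd (s n))" for k
  proof (induction k)
    case 0
    have "snd (s n) = fst (s n) \<inter> snd (s n)" using h sub by blast
    thus ?case using h fin by (metis add_0_right le_refl)
  next
    case (Suc k)
    have le: "sep_le (s (n+k)) (s (n + Suc k))" "s (n+k) \<noteq> s (n + Suc k)"
      using incr unfolding sep_less_def by auto
    have f: "fst (s (n + Suc k)) = V" using le(1) Suc sub unfolding sep_le_def by blast
    have "snd (s (n + Suc k)) \<subset> snd (s (n+k))"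
      using le f Suc unfolding sep_le_def by (metis prod_eq_iff psubsetI)
    hence "finite (snd (s (n + Suc k)))" "card (snd (s (n + Suc k))) < card (snd (s (n+k)))"
      using Suc by (auto intro: psubset_card_mono finite_subset)
    thus ?case using f Suc by simp
  qed
  from key[of "Suc (card (snd (s n)))"] show False by simp
qed

theorem mainTheorem13:
  fixes V :: "'v set" and E :: "('v \<times> 'v) set"
    and s :: "nat \<Rightarrow> 'v set \<times> 'v set"
    and P :: "nat \<Rightarrow> ('v set \<times> 'v set) set"
  assumes graph: "is_graph V E"
    and seps: "\<forall>i. is_sep V E (s i)"
    and incr: "\<forall>i. sep_less (s i) (s (Suc i))"
    and pt: "\<forall>i. pre_tangle V E (P i)"
    and IM1: "\<forall>i. flip (s i) \<in> P i \<and> s i \<in> P (Suc i)"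
    and IM2': "\<forall>i. eff_distinguishes V E (P i) (P (Suc i)) (s i)"
  shows "\<forall>i j. i < j \<longrightarrow>
           (\<forall>m\<in>{i..<j}. (\<forall>l\<in>{i..<j}. sep_order (s m) \<le> sep_order (s l)) \<longrightarrow>
              eff_distinguishes V E (P i) (P j) (s m))"
proof (intro allI impI ballI)
  fix i j m
  assume ij: "i < j" and m: "m \<in> {i..<j}"
    and min: "\<forall>l\<in>{i..<j}. sep_order (s m) \<le> sep_order (s l)"
  have fin: "\<forall>i. finite (fst (s i) \<inter> snd (s i))"
  proof
    fix n
    have "sep_order (s n) \<noteq> \<infinity>" using pt_mem pt IM1 by blast
    thus "finite (fst (s n) \<inter> snd (s n))" unfolding sep_order_def by (auto split: if_splits)
  qed
  have nV: "\<And>n. fst (s n) \<noteq> V" using fst_not_V[OF seps incr fin] .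
  have small: "\<And>a b. sep_le a b \<Longrightarrow> b = flip a \<Longrightarrow> is_sep V E a \<Longrightarrow> fst b = V"
    unfolding sep_le_def flip_def is_sep_def by (auto split: prod.splits)
  have up: "s m \<in> P (Suc m + k)" if "Suc m + k \<le> j" for k
    using that
  proof (induction k)
    case 0 thus ?case using IM1 by simp
  next
    case (Suc k)
    let ?l = "Suc m + k"
    have lj: "?l \<in> {i..<j}" using Suc.prems m by auto
    have o: "sep_order (s m) \<le> sep_order (s ?l)" using min lj by blast
    have sl: "s ?l \<in> P (Suc ?l)" using IM1 by blast
    have "s m \<in> P (Suc ?l) \<or> flip (s m) \<in> P (Suc ?l)"
      using pt_orient[OF pt[rule_format] sl seps[rule_format] o] by blast
    moreover have "flip (s m) \<notin> P (Suc ?l)"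
    proof
      assume fm: "flip (s m) \<in> P (Suc ?l)"
      have le: "sep_le (s m) (s ?l)" "s m \<noteq> s ?l" using chain_less[OF incr, of m ?l] by auto
      have "s ?l = flip (s m) \<or> s ?l = flip (flip (s m))"
        using pt_cons[OF pt[rule_format] fm sl] le by (simp add: flip_def)
      hence "s ?l = flip (s m)" using le by (simp add: flip_def)
      thus False using small[OF le(1)] seps nV by blast
    qed
    ultimately show ?case by simp
  qed
  have sj: "s m \<in> P j"
    using up[of "j - Suc m"] m by simp
  have down: "flip (s m) \<in> P (m - k)" if "k \<le> m - i" for k
    using that
  proof (induction k)
    case 0 thus ?case using IM1 by simp
  next
    case (Suc k)
    let ?l = "m - Suc k"
    have lm: "?l < m" "Suc ?l = m - k" using Suc.prems m by auto
    have lj: "?l \<in> {i..<j}" using Suc.prems m by auto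
    have o: "sep_order (s m) \<le> sep_order (flip (s ?l))" using min lj order_flip by metis
    have sl: "flip (s ?l) \<in> P ?l" using IM1 by blast
    have "s m \<in> P ?l \<or> flip (s m) \<in> P ?l"
      using pt_orient[OF pt[rule_format] sl seps[rule_format] o] by blast
    moreover have "s m \<notin> P ?l"
    proof
      assume fm: "s m \<in> P ?l"
      have le: "sep_le (s ?l) (s m)" "s ?l \<noteq> s m" using chain_less[OF incr lm(1)] by auto
      have "s m = flip (s ?l) \<or> s m = flip (flip (s ?l))"
        using pt_cons[OF pt[rule_format] sl fm] le by (simp add: flip_def)
      hence "s m = flip (s ?l)" using le by (simp add: flip_def)
      thus False using small[OF le(1)] seps nV by blast
    qed
    ultimately show ?case by simp
  qed
  have fi: "flip (s m) \<in> P i" using down[of "m - i"] m by simp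
  have neq: "s m \<noteq> flip (s m)"
  proof
    assume "s m = flip (s m)"
    hence "fst (s m) = snd (s m)" by (metis flip_def fst_conv snd_conv)
    thus False using nV[of m] seps[rule_format, of m] unfolding is_sep_def by (cases "s m") auto
  qed
  have dist: "distinguishes V E (P i) (P j) (s m)"
    unfolding distinguishes_def
  proof (intro conjI exI)
    show "is_sep V E (s m)" using seps by blast
    show "flip (s m) \<noteq> s m" using neq by metis
  qed (use fi sj in auto)
  have eff: "sep_order (s m) \<le> sep_order t" if dt: "distinguishes V E (P i) (P j) t" for t
  proof (rule ccontr)
    assume nle: "\<not> sep_order (s m) \<le> sep_order t"
    hence lt: "\<forall>l\<in>{i..<j}. sep_order t < sep_order (s l)"
      using min by (meson le_less_trans linorder_not_le)
    obtain x y where xy: "x \<in> P i" "y \<in> P j" "x \<in> {t, flip t}" "y \<in> {t, flip t}" "x \<noteq> y"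
      and tsep: "is_sep V E t"
      using dt unfolding distinguishes_def by blast
    have ff: "flip (flip u) = u" for u :: "'v set \<times> 'v set" by (simp add: flip_def)
    have ox: "sep_order x = sep_order t" using xy(3) order_flip[of t] by auto
    have xsep: "is_sep V E x" using xy(3) tsep is_sep_flip[OF tsep] by auto
    have xprop: "x \<in> P (i + k)" if "i + k \<le> j" for k
      using that
    proof (induction k)
      case 0 thus ?case using xy by simp
    next
      case (Suc k)
      let ?n = "i + k"
      have nj: "?n \<in> {i..<j}" using Suc.prems by auto
      have xn: "x \<in> P ?n" using Suc by simp
      have o: "sep_order x \<le> sep_order (s ?n)" using lt nj ox by (simp add: order_less_imp_le)
      have "x \<in> P (Suc ?n) \<or> flip x \<in> P (Suc ?n)"
        using pt_orient[OF pt[rule_format] _ xsep o] IM1 by blast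
      moreover have "flip x \<notin> P (Suc ?n)"
      proof
        assume fx: "flip x \<in> P (Suc ?n)"
        have "x \<noteq> flip x" using xy ff[of t] by auto
        hence "distinguishes V E (P ?n) (P (Suc ?n)) t"
        proof -
          have fxt: "flip x \<in> {t, flip t}" using xy(3) ff[of t] by auto
          show ?thesis unfolding distinguishes_def
            using tsep xn fx xy(3) fxt \<open>x \<noteq> flip x\<close> by blast
        qed
        hence "sep_order (s ?n) \<le> sep_order t" using IM2' unfolding eff_distinguishes_def by blast
        thus False using lt nj by (meson leD)
      qed
      ultimately show ?case by simp
    qed
    have xj: "x \<in> P j" using xprop[of "j - i"] ij by simp
    have "y = flip x" using xy ff[of t] by auto
    hence "x = flip x" using pt_both[OF pt[rule_format] xj] xy(2) by blast
    thus False using xy ff[of t] by auto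
  qed
  show "eff_distinguishes V E (P i) (P j) (s m)"
    unfolding eff_distinguishes_def using dist eff by (intro conjI allI impI)
qed

end
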